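(* Let $\mathcal{A}$ be a triangular algebra over a field $F$ with $\operatorname{char}(F)\neq2$. Then $\operatorname{JCent}(\mathcal{A})=\operatorname{Cent}(\mathcal{A})$.
   Context: A triangular algebra is an algebra of the form $\mathcal{A}=\begin{pmatrix}B & M\\ 0 & C\end{pmatrix}$ (with formal matrix operations), where $B,C$ are unital algebras and $M$ is a $(B,C)$-bimodule that is faithful as a left $B$-module and as a right $C$-module. $x\circ y=xy+yx$. $\operatorname{JCent}(\mathcal{A})$: linear $f:\mathcal{A}\to\mathcal{A}$ with $f(x\circ y)=f(x)\circ y$ for all $x,y$. $\operatorname{Cent}(\mathcal{A})$: linear $f$ with $f(xy)=f(x)y=xf(y)$ for all $x,y$. *)

theory Defs
  imports Main
begin

text \<open>A triangular algebra over a field F is modelled on the carrier type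
  'b \<times> 'm \<times> 'c (triples (b,m,c) standing for the formal matrix [[b,m],[0,c]]).\<close>

locale triangular_algebra =
  fixes sB :: "'f::field \<Rightarrow> 'b::ring_1 \<Rightarrow> 'b"
    and sC :: "'f \<Rightarrow> 'c::ring_1 \<Rightarrow> 'c"
    and sM :: "'f \<Rightarrow> 'm::ab_group_add \<Rightarrow> 'm"
    and lB :: "'b \<Rightarrow> 'm \<Rightarrow> 'm"
    and rC :: "'m \<Rightarrow> 'c \<Rightarrow> 'm"
  assumes sB_add: "sB a (x + y) = sB a x + sB a y"
    and sB_add2: "sB (a + a') x = sB a x + sB a' x"
    and sB_mult: "sB (a * a') x = sB a (sB a' x)"
    and sB_one: "sB 1 x = x"
    and sB_alg: "sB a (x * y) = sB a x * y" "sB a (x * y) = x * sB a y"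
    and sC_add: "sC a (z + w) = sC a z + sC a w"
    and sC_add2: "sC (a + a') z = sC a z + sC a' z"
    and sC_mult: "sC (a * a') z = sC a (sC a' z)"
    and sC_one: "sC 1 z = z"
    and sC_alg: "sC a (z * w) = sC a z * w" "sC a (z * w) = z * sC a w"
    and sM_add: "sM a (m + n) = sM a m + sM a n"
    and sM_add2: "sM (a + a') m = sM a m + sM a' m"
    and sM_mult: "sM (a * a') m = sM a (sM a' m)"
    and sM_one: "sM 1 m = m"
    and lB_add: "lB x (m + n) = lB x m + lB x n"
    and lB_add2: "lB (x + y) m = lB x m + lB y m"
    and lB_mult: "lB (x * y) m = lB x (lB y m)"
    and lB_one: "lB 1 m = m"
    and lB_smult: "sM a (lB x m) = lB (sB a x) m" "sM a (lB x m) = lB x (sM a m)"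
    and rC_add: "rC (m + n) z = rC m z + rC n z"
    and rC_add2: "rC m (z + w) = rC m z + rC m w"
    and rC_mult: "rC m (z * w) = rC (rC m z) w"
    and rC_one: "rC m 1 = m"
    and rC_smult: "sM a (rC m z) = rC (sM a m) z" "sM a (rC m z) = rC m (sC a z)"
    and bimod: "lB x (rC m z) = rC (lB x m) z"
    and faithful_left: "(\<forall>m. lB x m = 0) \<Longrightarrow> x = 0"
    and faithful_right: "(\<forall>m. rC m z = 0) \<Longrightarrow> z = 0"

fun tri_add :: "'b::plus \<times> 'm::plus \<times> 'c::plus \<Rightarrow> 'b \<times> 'm \<times> 'c \<Rightarrow> 'b \<times> 'm \<times> 'c" where
  "tri_add (x, m, z) (y, n, w) = (x + y, m + n, z + w)"

fun tri_smult :: "('f \<Rightarrow> 'b \<Rightarrow> 'b) \<Rightarrow> ('f \<Rightarrow> 'c \<Rightarrow> 'c) \<Rightarrow> ('f \<Rightarrow> 'm \<Rightarrow> 'm)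
    \<Rightarrow> 'f \<Rightarrow> 'b \<times> 'm \<times> 'c \<Rightarrow> 'b \<times> 'm \<times> 'c" where
  "tri_smult sB sC sM a (x, m, z) = (sB a x, sM a m, sC a z)"

fun tri_mult :: "('b::times \<Rightarrow> 'm::plus \<Rightarrow> 'm) \<Rightarrow> ('m \<Rightarrow> 'c::times \<Rightarrow> 'm)
    \<Rightarrow> 'b \<times> 'm \<times> 'c \<Rightarrow> 'b \<times> 'm \<times> 'c \<Rightarrow> 'b \<times> 'm \<times> 'c" where
  "tri_mult lB rC (x, m, z) (y, n, w) = (x * y, lB x n + rC m w, z * w)"

definition tri_jordan where
  "tri_jordan lB rC p q = tri_add (tri_mult lB rC p q) (tri_mult lB rC q p)"

definition tri_linear where
  "tri_linear sB sC sM f \<longleftrightarrow>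
     (\<forall>p q. f (tri_add p q) = tri_add (f p) (f q)) \<and>
     (\<forall>a p. f (tri_smult sB sC sM a p) = tri_smult sB sC sM a (f p))"

definition JCent where
  "JCent sB sC sM lB rC = {f. tri_linear sB sC sM f \<and>
     (\<forall>p q. f (tri_jordan lB rC p q) = tri_jordan lB rC (f p) q)}"

definition Cent where
  "Cent sB sC sM lB rC = {f. tri_linear sB sC sM f \<and>
     (\<forall>p q. f (tri_mult lB rC p q) = tri_mult lB rC (f p) q \<and>
            f (tri_mult lB rC p q) = tri_mult lB rC p (f q))}"

end

theory Submission
  imports Defs
begin

context triangular_algebra
begin

lemma half_f: assumes "(2::'f) \<noteq> 0" shows "inverse (2::'f) + inverse 2 = 1"
proof -
  have "inverse (2::'f) + inverse 2 = 2 * inverse 2" by simp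
  also have "\<dots> = 1" using assms by simp
  finally show ?thesis .
qed

lemma halfB: assumes "(2::'f) \<noteq> 0" "x + x = y + (y::'b)" shows "x = y"
proof -
  define h where "h = inverse (2::'f)"
  have hh: "h + h = 1" unfolding h_def by (rule half_f[OF assms(1)])
  have "x = sB (h + h) x" by (simp only: hh sB_one)
  also have "\<dots> = sB h (x + x)" by (simp only: sB_add sB_add2)
  also have "\<dots> = sB (h + h) y" using assms(2) by (simp only: sB_add sB_add2)
  also have "\<dots> = y" by (simp only: hh sB_one)
  finally show ?thesis .
qed

lemma halfC: assumes "(2::'f) \<noteq> 0" "x + x = y + (y::'c)" shows "x = y"
proof -
  define h where "h = inverse (2::'f)"
  have hh: "h + h = 1" unfolding h_def by (rule half_f[OF assms(1)])
  have "x = sC (h + h) x" by (simp only: hh sC_one)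
  also have "\<dots> = sC h (x + x)" by (simp only: sC_add sC_add2)
  also have "\<dots> = sC (h + h) y" using assms(2) by (simp only: sC_add sC_add2)
  also have "\<dots> = y" by (simp only: hh sC_one)
  finally show ?thesis .
qed

lemma halfM: assumes "(2::'f) \<noteq> 0" "x + x = y + (y::'m)" shows "x = y"
proof -
  define h where "h = inverse (2::'f)"
  have hh: "h + h = 1" unfolding h_def by (rule half_f[OF assms(1)])
  have "x = sM (h + h) x" by (simp only: hh sM_one)
  also have "\<dots> = sM h (x + x)" by (simp only: sM_add sM_add2)
  also have "\<dots> = sM (h + h) y" using assms(2) by (simp only: sM_add sM_add2)
  also have "\<dots> = y" by (simp only: hh sM_one)
  finally show ?thesis .
qed

lemma lB_zero[simp]: "lB x 0 = 0"
  using lB_add[of x 0 0] by simp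
lemma lB_zero2[simp]: "lB 0 m = 0"
  using lB_add2[of 0 0 m] by simp
lemma rC_zero[simp]: "rC 0 z = 0"
  using rC_add[of 0 0 z] by simp
lemma rC_zero2[simp]: "rC m 0 = 0"
  using rC_add2[of m 0 0] by simp
lemma lB_diff: "lB (x - y) m = lB x m - lB y m"
  using lB_add2[of "x - y" y m] by (simp add: algebra_simps)
lemma rC_diff: "rC m (x - y) = rC m x - rC m y"
  using rC_add2[of m "x - y" y] by (simp add: algebra_simps)

lemma Cent_sub: "f \<in> Cent sB sC sM lB rC \<Longrightarrow> f \<in> JCent sB sC sM lB rC"
proof -
  assume a: "f \<in> Cent sB sC sM lB rC"
  hence lin: "tri_linear sB sC sM f" and m: "\<And>p q. f (tri_mult lB rC p q) = tri_mult lB rC (f p) q \<and>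
            f (tri_mult lB rC p q) = tri_mult lB rC p (f q)" unfolding Cent_def by blast+
  have add: "\<And>p q. f (tri_add p q) = tri_add (f p) (f q)" using lin unfolding tri_linear_def by auto
  have "f (tri_jordan lB rC p q) = tri_jordan lB rC (f p) q" for p q
  proof -
    have "f (tri_jordan lB rC p q) = tri_add (f (tri_mult lB rC p q)) (f (tri_mult lB rC q p))"
      unfolding tri_jordan_def by (rule add)
    also have "\<dots> = tri_jordan lB rC (f p) q" unfolding tri_jordan_def using m[of p q] m[of q p] by metis
    finally show ?thesis .
  qed
  thus ?thesis unfolding JCent_def using lin by simp
qed

lemma JCent_sub:
  assumes two: "(2::'f) \<noteq> 0" and fJ: "f \<in> JCent sB sC sM lB rC"
  shows "f \<in> Cent sB sC sM lB rC"
proof -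
  have lin: "tri_linear sB sC sM f" and J: "\<And>p q. f (tri_jordan lB rC p q) = tri_jordan lB rC (f p) q"
    using fJ unfolding JCent_def by auto
  have add: "\<And>p q. f (tri_add p q) = tri_add (f p) (f q)" using lin unfolding tri_linear_def by auto
  obtain z1 zm z2 where z: "f (1,0,1) = (z1,zm,z2)" by (cases "f (1,0,1)") auto
  have A0: "tri_add (f (b,m,c)) (f (b,m,c)) = (z1*b + b*z1, lB z1 m + rC zm c + (lB b zm + rC m z2), z2*c + c*z2)" for b m c
  proof -
    have "tri_add (f (b,m,c)) (f (b,m,c)) = f (tri_add (b,m,c) (b,m,c))" by (rule add[symmetric])
    also have "tri_add (b,m,c) (b,m,c) = tri_jordan lB rC (1,0,1) (b,m,c)"
      by (simp add: tri_jordan_def lB_one rC_one)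
    also have "f \<dots> = tri_jordan lB rC (z1,zm,z2) (b,m,c)" using J z by simp
    finally show ?thesis by (simp add: tri_jordan_def)
  qed
  obtain a n d where fe: "f (1,0,0) = (a,n,d)" by (cases "f (1,0,0)") auto
  have "tri_add (f (1,0,0)) (f (1,0,0)) = f (tri_jordan lB rC (1,0,0) (1,0,0))"
    by (simp add: add[symmetric] tri_jordan_def)
  also have "\<dots> = tri_jordan lB rC (a,n,d) (1,0,0)" using J fe by simp
  finally have "(a+a, n+n, d+d) = (a + a, n, 0)" using fe by (simp add: tri_jordan_def lB_one)
  hence n0: "n + n = n" and d0: "d + d = 0 + 0" by simp_all
  have d00: "d = 0" using halfC[OF two d0] .
  have "(a+a, n+n, d+d) = (z1*1 + 1*z1, zm, 0)" using A0[of 1 0 0] fe by (simp add: lB_one)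
  hence "n + n = zm" "a + a = z1 + z1" by auto
  hence zm0: "zm = 0" and a: "a = z1" using n0 halfB[OF two, of a z1] by auto
  have n00: "n = 0" using n0 by (metis add_cancel_right_right)
  note A = A0[unfolded zm0, simplified]
  have fM: "f (0,m,0) = (0, lB z1 m, 0)" for m
  proof -
    have "f (0,m,0) = f (tri_jordan lB rC (1,0,0) (0,m,0))" by (simp add: tri_jordan_def lB_one)
    also have "\<dots> = tri_jordan lB rC (a,n,d) (0,m,0)" using J fe by simp
    finally show ?thesis using a n00 d00 by (simp add: tri_jordan_def)
  qed
  have zc: "rC m z2 = lB z1 m" for m
    using A[of 0 m 0] fM[of m] by simp
  have z1c: "z1 * b = b * z1" for b
  proof -
    obtain a' n' d' where fb: "f (b,0,0) = (a',n',d')" by (cases "f (b,0,0)") auto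
    have aa: "a' + a' = z1*b + b*z1" and "n' + n' = 0 + 0" and "d' + d' = 0 + 0" using A[of b 0 0] fb by simp_all
    hence n'0: "n' = 0" and d'0: "d' = 0" using halfM[OF two] halfC[OF two] by blast+
    have "lB z1 (lB b m) = lB a' m" for m
    proof -
      have "(0, lB z1 (lB b m), 0) = f (0, lB b m, 0)" using fM by simp
      also have "(0::'b, lB b m, 0::'c) = tri_jordan lB rC (b,0,0) (0,m,0)" by (simp add: tri_jordan_def)
      also have "f \<dots> = tri_jordan lB rC (a',n',d') (0,m,0)" using J fb by simp
      finally show ?thesis using n'0 d'0 by (simp add: tri_jordan_def)
    qed
    hence "lB (z1*b) m + lB (z1*b) m = lB (z1*b) m + lB (b*z1) m" for m
    proof -
      assume h: "\<And>m. lB z1 (lB b m) = lB a' m"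
      have "lB (z1*b) m + lB (z1*b) m = lB a' m + lB a' m" using h[of m] by (simp add: lB_mult)
      also have "\<dots> = lB (a' + a') m" by (simp add: lB_add2)
      also have "\<dots> = lB (z1*b) m + lB (b*z1) m" using aa by (simp add: lB_add2)
      finally show ?thesis .
    qed
    hence "lB (z1*b - b*z1) m = 0" for m by (simp add: lB_diff)
    hence "z1*b - b*z1 = 0" using faithful_left by blast
    thus ?thesis by simp
  qed
  have z2c: "z2 * c = c * z2" for c
  proof -
    obtain a' n' d' where fc: "f (0,0,c) = (a',n',d')" by (cases "f (0,0,c)") auto
    have dd: "d' + d' = z2*c + c*z2" and "n' + n' = 0 + 0" and "a' + a' = 0 + 0" using A[of 0 0 c] fc by simp_all
    hence n'0: "n' = 0" and a'0: "a' = 0" using halfM[OF two] halfB[OF two] by blast+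
    have "rC (rC m c) z2 = rC m d'" for m
    proof -
      have "(0, rC (rC m c) z2, 0) = f (0, rC m c, 0)" using fM zc by simp
      also have "(0::'b, rC m c, 0::'c) = tri_jordan lB rC (0,0,c) (0,m,0)" by (simp add: tri_jordan_def)
      also have "f \<dots> = tri_jordan lB rC (a',n',d') (0,m,0)" using J fc by simp
      finally show ?thesis using n'0 a'0 by (simp add: tri_jordan_def)
    qed
    hence "rC m (c*z2) + rC m (c*z2) = rC m (z2*c) + rC m (c*z2)" for m
    proof -
      assume h: "\<And>m. rC (rC m c) z2 = rC m d'"
      have "rC m (c*z2) + rC m (c*z2) = rC m d' + rC m d'" using h[of m] by (simp add: rC_mult)
      also have "\<dots> = rC m (d' + d')" by (simp add: rC_add2)
      also have "\<dots> = rC m (z2*c) + rC m (c*z2)" using dd by (simp add: rC_add2)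
      finally show ?thesis .
    qed
    hence "rC m (z2*c - c*z2) = 0" for m by (simp add: rC_diff)
    hence "z2*c - c*z2 = 0" using faithful_right by blast
    thus ?thesis by simp
  qed
  have fF: "f (b,m,c) = (z1*b, lB z1 m, z2*c)" for b m c
  proof -
    obtain x y w where fx: "f (b,m,c) = (x,y,w)" by (cases "f (b,m,c)") auto
    have "x + x = z1*b + z1*b" "y + y = lB z1 m + lB z1 m" "w + w = z2*c + z2*c"
      using A[of b m c] fx z1c[of b] z2c[of c] zc[of m] by auto
    thus ?thesis using fx halfB[OF two, of x] halfM[OF two, of y] halfC[OF two, of w] by simp
  qed
  show ?thesis unfolding Cent_def
  proof (intro CollectI conjI allI lin)
    fix p q :: "'b \<times> 'm \<times> 'c"
    obtain b m c where p: "p = (b,m,c)" by (cases p) auto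
    obtain b' m' c' where q: "q = (b',m',c')" by (cases q) auto
    show "f (tri_mult lB rC p q) = tri_mult lB rC (f p) q"
      unfolding p q by (simp add: fF lB_add bimod lB_mult mult.assoc)
    have e1: "lB z1 (lB b m') = lB b (lB z1 m')"
      by (metis lB_mult z1c)
    have e2: "lB z1 (rC m c') = rC m (z2 * c')"
      by (metis bimod rC_mult zc)
    have e3: "z1 * (b * b') = b * (z1 * b')" by (metis mult.assoc z1c)
    have e4: "z2 * (c * c') = c * (z2 * c')" by (metis mult.assoc z2c)
      show "f (tri_mult lB rC p q) = tri_mult lB rC p (f q)"
      unfolding p q using e1 e2 e3 e4 by (simp add: fF lB_add)
  qed
qed

end

theorem corollary3p8:
  fixes sB :: "'f::field \<Rightarrow> 'b::ring_1 \<Rightarrow> 'b"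
    and sC :: "'f \<Rightarrow> 'c::ring_1 \<Rightarrow> 'c"
    and sM :: "'f \<Rightarrow> 'm::ab_group_add \<Rightarrow> 'm"
    and lB :: "'b \<Rightarrow> 'm \<Rightarrow> 'm"
    and rC :: "'m \<Rightarrow> 'c \<Rightarrow> 'm"
  assumes "triangular_algebra sB sC sM lB rC"
    and "(2::'f) \<noteq> 0"
  shows "JCent sB sC sM lB rC = Cent sB sC sM lB rC"
  using triangular_algebra.Cent_sub[OF assms(1)] triangular_algebra.JCent_sub[OF assms]
  by blast

end
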